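(* If $f \in R$ satisfies $v(f) > a_n$, then $f \in \mathfrak m^2$.
   Context: Let $k$ be a field and let $(R,\mathfrak m)$ be a complete local noetherian domain of dimension $1$ containing $k$ with $R/\mathfrak m = k$, with normalization $\overline R$ having residue field $k$, so $\overline R = k[[t]]$ and $R \subseteq k[[t]]$ is finite birational. Let $v$ be the $t$-adic valuation, $v(0)=\infty$. For $A \subseteq k((t))$ let $v(A) = \{v(f): f\in A\setminus\{0\}\}$. The Herzog–Kunz sequence of $R$ is $v(\mathfrak m)\setminus v(\mathfrak m^2)$ listed increasingly as $a_1 < \cdots < a_n$. *)

theory Defs
  imports "HOL-Computational_Algebra.Formal_Power_Series"
begin

text \<open>We work inside k[[t]] = 'a fps, 'a a field; subsets of k[[t]] model subrings.\<close>

definition is_subring :: "'a::field fps set \<Rightarrow> bool" where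
  "is_subring R \<longleftrightarrow> 0 \<in> R \<and> 1 \<in> R \<and>
     (\<forall>x\<in>R. \<forall>y\<in>R. x + y \<in> R \<and> x - y \<in> R \<and> x * y \<in> R)"

definition is_ideal_of :: "'a::field fps set \<Rightarrow> 'a fps set \<Rightarrow> bool" where
  "is_ideal_of I R \<longleftrightarrow> I \<subseteq> R \<and> 0 \<in> I \<and>
     (\<forall>x\<in>I. \<forall>y\<in>I. x + y \<in> I) \<and> (\<forall>r\<in>R. \<forall>x\<in>I. r * x \<in> I)"

definition ideal_prod :: "'a::field fps set \<Rightarrow> 'a fps set \<Rightarrow> 'a fps set" where
  "ideal_prod I J = {x. \<exists>(n::nat) a b. (\<forall>i<n. a i \<in> I \<and> b i \<in> J) \<and> x = (\<Sum>i<n. a i * b i)}"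

text \<open>Maximal ideal of the (local) ring R: the non-units of R.\<close>
definition max_ideal :: "'a::field fps set \<Rightarrow> 'a fps set" where
  "max_ideal R = {f \<in> R. \<not> (\<exists>g\<in>R. f * g = 1)}"

fun max_ideal_pow :: "'a::field fps set \<Rightarrow> nat \<Rightarrow> 'a fps set" where
  "max_ideal_pow R 0 = R"
| "max_ideal_pow R (Suc j) = ideal_prod (max_ideal R) (max_ideal_pow R j)"

definition is_local :: "'a::field fps set \<Rightarrow> bool" where
  "is_local R \<longleftrightarrow> is_ideal_of (max_ideal R) R \<and> max_ideal R \<noteq> R"

definition is_noetherian :: "'a::field fps set \<Rightarrow> bool" where
  "is_noetherian R \<longleftrightarrow> (\<forall>I. is_ideal_of I R \<longrightarrow>
     (\<exists>(n::nat) g. (\<forall>i<n. g i \<in> I) \<and>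
        (\<forall>x\<in>I. \<exists>r. (\<forall>i<n. r i \<in> R) \<and> x = (\<Sum>i<n. r i * g i))))"

definition is_complete_local :: "'a::field fps set \<Rightarrow> bool" where
  "is_complete_local R \<longleftrightarrow> (\<forall>x :: nat \<Rightarrow> 'a fps.
     (\<forall>i. x i \<in> R) \<and> (\<forall>j. \<exists>N. \<forall>p\<ge>N. \<forall>q\<ge>N. x p - x q \<in> max_ideal_pow R j) \<longrightarrow>
     (\<exists>y\<in>R. \<forall>j. \<exists>N. \<forall>p\<ge>N. x p - y \<in> max_ideal_pow R j))"

definition fps_finite_over :: "'a::field fps set \<Rightarrow> bool" where
  "fps_finite_over R \<longleftrightarrow> (\<exists>(n::nat) g. \<forall>h :: 'a fps. \<exists>r. (\<forall>i<n. r i \<in> R) \<and> h = (\<Sum>i<n. r i * g i))"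

text \<open>Birational: k[[t]] lies in the fraction field of R.\<close>
definition fps_birational_over :: "'a::field fps set \<Rightarrow> bool" where
  "fps_birational_over R \<longleftrightarrow> (\<forall>h :: 'a fps. \<exists>a\<in>R. \<exists>b\<in>R. b \<noteq> 0 \<and> h * b = a)"

text \<open>Value set v(A) with v the t-adic valuation (subdegree).\<close>
definition vals :: "'a::field fps set \<Rightarrow> nat set" where
  "vals A = {subdegree f | f. f \<in> A \<and> f \<noteq> 0}"

text \<open>Herzog--Kunz set v(m) minus v(m^2); its largest element is a_n.\<close>
definition HK_set :: "'a::field fps set \<Rightarrow> nat set" where
  "HK_set R = vals (max_ideal R) - vals (ideal_prod (max_ideal R) (max_ideal R))"

end

theory Submission
  imports Defs
begin

unbundle fps_syntax

lemma ip_zero: "0 \<in> ideal_prod I J"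
  unfolding ideal_prod_def by (rule CollectI, rule exI[of _ 0], auto)

lemma ip_single: "a \<in> I \<Longrightarrow> b \<in> J \<Longrightarrow> a * b \<in> ideal_prod I J"
  unfolding ideal_prod_def
  by (rule CollectI, rule exI[of _ 1], rule exI[of _ "\<lambda>_. a"], rule exI[of _ "\<lambda>_. b"], auto)

lemma ip_add_one:
  assumes "x \<in> ideal_prod I J" "a \<in> I" "b \<in> J"
  shows "x + a * b \<in> ideal_prod I J"
proof -
  from assms(1) obtain n A B where h: "\<forall>i<(n::nat). A i \<in> I \<and> B i \<in> J" "x = (\<Sum>i<n. A i * B i)"
    unfolding ideal_prod_def mem_Collect_eq by blast
  define A' where "A' = A(n := a)"
  define B' where "B' = B(n := b)"
  have "\<forall>i<Suc n. A' i \<in> I \<and> B' i \<in> J" using h assms by (auto simp: A'_def B'_def less_Suc_eq)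
  moreover have "x + a * b = (\<Sum>i<Suc n. A' i * B' i)"
    using h by (simp add: A'_def B'_def)
  ultimately show ?thesis unfolding ideal_prod_def mem_Collect_eq by blast
qed

lemma ip_add:
  assumes "x \<in> ideal_prod I J" "y \<in> ideal_prod I J"
  shows "x + y \<in> ideal_prod I J"
proof -
  from assms(2) obtain n A B where h: "\<forall>i<(n::nat). A i \<in> I \<and> B i \<in> J" "y = (\<Sum>i<n. A i * B i)"
    unfolding ideal_prod_def mem_Collect_eq by blast
  have "\<forall>m\<le>n. x + (\<Sum>i<m. A i * B i) \<in> ideal_prod I J"
  proof (intro allI impI)
    fix m assume "m \<le> n" then show "x + (\<Sum>i<m. A i * B i) \<in> ideal_prod I J"
    proof (induction m)
      case 0 then show ?case using assms(1) by simp
    next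
      case (Suc m)
      then have "x + (\<Sum>i<m. A i * B i) + A m * B m \<in> ideal_prod I J"
        using h by (intro ip_add_one) auto
      then show ?case by (simp add: add.assoc)
    qed
  qed
  then show ?thesis using h by simp
qed

lemma ip_mult:
  assumes "\<forall>r\<in>R. \<forall>x\<in>I. r * x \<in> I" "r \<in> R" "x \<in> ideal_prod I J"
  shows "r * x \<in> ideal_prod I J"
proof -
  from assms(3) obtain n A B where h: "\<forall>i<(n::nat). A i \<in> I \<and> B i \<in> J" "x = (\<Sum>i<n. A i * B i)"
    unfolding ideal_prod_def mem_Collect_eq by blast
  have h1: "\<forall>i<n. r * A i \<in> I \<and> B i \<in> J" using h assms by auto
  have h2: "r * x = (\<Sum>i<n. (r * A i) * B i)"
    using h by (simp add: sum_distrib_left mult.assoc)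
  have "\<exists>n a b. (\<forall>i<n. a i \<in> I \<and> b i \<in> J) \<and> r * x = (\<Sum>i<(n::nat). a i * b i)"
    apply (rule exI[of _ n])
    apply (rule exI[of _ "\<lambda>i. r * A i"])
    apply (rule exI[of _ B])
    using h1 h2 by simp
  then show ?thesis unfolding ideal_prod_def mem_Collect_eq .
qed

lemma sub_sum: "is_subring R \<Longrightarrow> (\<forall>i<(n::nat). g i \<in> R) \<Longrightarrow> (\<Sum>i<n. g i) \<in> R"
  by (induction n) (auto simp: is_subring_def)

lemma sub_prod: "is_subring R \<Longrightarrow> (\<forall>i\<in>S. g i \<in> R) \<Longrightarrow> (\<Prod>i\<in>S. g i) \<in> R"
  by (induction S rule: infinite_finite_induct) (auto simp: is_subring_def)

lemma ip_sub:
  assumes "is_subring R" "I \<subseteq> R" "J \<subseteq> R" "x \<in> ideal_prod I J"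
  shows "x \<in> R"
proof -
  from assms(4) obtain n A B where h: "\<forall>i<(n::nat). A i \<in> I \<and> B i \<in> J" "x = (\<Sum>i<n. A i * B i)"
    unfolding ideal_prod_def mem_Collect_eq by blast
  have "\<forall>i<n. A i * B i \<in> R" using h assms(1-3) unfolding is_subring_def by blast
  then show ?thesis using h sub_sum[OF assms(1)] by simp
qed

lemma in_max:
  assumes "f \<in> R" "subdegree f > 0"
  shows "f \<in> max_ideal R"
proof -
  have "\<not> (\<exists>g\<in>R. f * g = 1)"
  proof
    assume "\<exists>g\<in>R. f * g = 1"
    then obtain g where "f * g = 1" by blast
    moreover have "f \<noteq> 0" using assms(2) by auto
    moreover have "g \<noteq> 0" using calculation by auto
    ultimately have "subdegree (f * g) = subdegree f + subdegree g" using subdegree_mult by blast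
    moreover have "subdegree (f * g) = 0" using \<open>f * g = 1\<close> by simp
    ultimately show False using assms(2) by simp
  qed
  then show ?thesis using assms(1) by (simp add: max_ideal_def)
qed

theorem mainTheorem6:
  fixes R :: "'a::field fps set" and f :: "'a fps"
  assumes subring: "is_subring R"
    and contains_k: "\<And>c. fps_const c \<in> R"
    and local: "is_local R"
    and residue: "\<forall>g\<in>R. \<exists>c. g - fps_const c \<in> max_ideal R"
    and noeth: "is_noetherian R"
    and complete: "is_complete_local R"
    and finite_ext: "fps_finite_over R"
    and birational: "fps_birational_over R"
    and fR: "f \<in> R"
    and fval: "f = 0 \<or> subdegree f > Max (HK_set R)"
  shows "f \<in> ideal_prod (max_ideal R) (max_ideal R)"
proof -
  let ?m = "max_ideal R"
  let ?m2 = "ideal_prod ?m ?m"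
  have msub: "?m \<subseteq> R" by (auto simp: max_ideal_def)
  have mmul: "\<forall>r\<in>R. \<forall>x\<in>?m. r * x \<in> ?m" using local by (simp add: is_local_def is_ideal_of_def)
  have m2sub: "?m2 \<subseteq> R" using ip_sub[OF subring msub msub] by blast
  from finite_ext obtain n g where fg: "\<forall>h :: 'a fps. \<exists>r. (\<forall>i<(n::nat). r i \<in> R) \<and> h = (\<Sum>i<n. r i * g i)"
    unfolding fps_finite_over_def by blast
  have "\<forall>i. \<exists>a\<in>R. \<exists>b\<in>R. b \<noteq> 0 \<and> g i * b = a" using birational unfolding fps_birational_over_def by blast
  then obtain a b where ab: "\<And>i. a i \<in> R" "\<And>i. b i \<in> R" "\<And>i. b i \<noteq> 0" "\<And>i. g i * b i = a i"
    by metis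
  define B where "B = (\<Prod>i<n. b i)"
  have BR: "B \<in> R" unfolding B_def by (rule sub_prod[OF subring]) (simp add: ab(2))
  have B0: "B \<noteq> 0" unfolding B_def using ab(3) by simp
  have cond: "h * B \<in> R" for h
  proof -
    obtain r where r: "\<forall>i<n. r i \<in> R" "h = (\<Sum>i<n. r i * g i)" using fg by blast
    have "h * B = (\<Sum>i<n. r i * g i * B)" using r by (simp add: sum_distrib_right)
    also have "\<dots> = (\<Sum>i<n. r i * a i * (\<Prod>j\<in>{..<n}-{i}. b j))"
    proof (rule sum.cong[OF refl])
      fix i assume "i \<in> {..<n}"
      then have "B = b i * (\<Prod>j\<in>{..<n}-{i}. b j)" unfolding B_def
        using prod.remove[of "{..<n}" i b] by simp
      then have "r i * g i * B = r i * (g i * b i) * (\<Prod>j\<in>{..<n}-{i}. b j)"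
        by (simp only: mult.assoc)
      then show "r i * g i * B = r i * a i * (\<Prod>j\<in>{..<n}-{i}. b j)"
        using ab(4)[of i] by simp
    qed
    also have "\<dots> \<in> R"
    proof (rule sub_sum[OF subring], intro allI impI)
      fix i assume "i < n"
      have "(\<Prod>j\<in>{..<n}-{i}. b j) \<in> R" by (rule sub_prod[OF subring]) (simp add: ab(2))
      moreover have "r i * a i \<in> R"
        using r ab(1) \<open>i < n\<close> subring unfolding is_subring_def by blast
      ultimately show "r i * a i * (\<Prod>j\<in>{..<n}-{i}. b j) \<in> R"
        using subring unfolding is_subring_def by blast
    qed
    finally show ?thesis .
  qed
  define c where "c = subdegree B"
  have condR: "h \<in> R" if "h \<noteq> 0" "subdegree h \<ge> c" for h
  proof -
    have "B dvd h" using fps_dvd_iff[OF B0 that(1)] that(2) c_def by simp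
    then obtain q where "h = B * q" by blast
    then show ?thesis using cond[of q] by (simp add: mult.commute)
  qed
  define N where "N = 2 * c + 2"
  have big: "h \<in> ?m2" if "h \<noteq> 0" "subdegree h \<ge> N" for h
  proof -
    define x where "x = B * fps_X"
    have x0: "x \<noteq> 0" using B0 by (simp add: x_def)
    have sx: "subdegree x = c + 1" using B0 by (simp add: x_def c_def)
    have xR: "x \<in> R" using cond[of fps_X] by (simp add: x_def mult.commute)
    have xm: "x \<in> ?m" using in_max[OF xR] sx by simp
    have "x dvd h" using fps_dvd_iff[OF x0 that(1)] sx that(2) N_def by simp
    then obtain q where q: "h = x * q" by blast
    have q0: "q \<noteq> 0" using q that(1) by auto
    have sq: "subdegree q \<ge> c + 1" using q x0 q0 sx that(2) N_def by simp
    have qR: "q \<in> R" using condR[OF q0] sq by simp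
    have qm: "q \<in> ?m" using in_max[OF qR] sq by simp
    show ?thesis using q ip_single[OF xm qm] by simp
  qed
  have HKsub: "HK_set R \<subseteq> {..<N}"
  proof
    fix s assume s: "s \<in> HK_set R"
    then obtain h where h: "h \<in> ?m" "h \<noteq> 0" "s = subdegree h"
      unfolding HK_set_def vals_def by blast
    show "s \<in> {..<N}"
    proof (rule ccontr)
      assume "s \<notin> {..<N}"
      then have "h \<in> ?m2" using big h by simp
      then have "s \<in> vals ?m2" using h unfolding vals_def by blast
      then show False using s unfolding HK_set_def by blast
    qed
  qed
  have HKfin: "finite (HK_set R)" using HKsub finite_subset by blast
  have main: "\<forall>h. N - subdegree h = k \<longrightarrow> h \<in> R \<longrightarrow> (h = 0 \<or> subdegree h > Max (HK_set R)) \<longrightarrow> h \<in> ?m2" for k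
  proof (induction k rule: less_induct)
    case (less k)
    show ?case
    proof (intro allI impI)
      fix h assume hk: "N - subdegree h = k" and hR: "h \<in> R" and hv: "h = 0 \<or> subdegree h > Max (HK_set R)"
      show "h \<in> ?m2"
      proof (cases "h = 0")
        case True then show ?thesis by (simp add: ip_zero)
      next
        case h0: False
        show ?thesis
        proof (cases "subdegree h \<ge> N")
          case True then show ?thesis using big h0 by simp
        next
          case False
          have sv: "subdegree h > Max (HK_set R)" using hv h0 by simp
          then have hm: "h \<in> ?m" using in_max[OF hR] by simp
          have notHK: "subdegree h \<notin> HK_set R"
          proof
            assume "subdegree h \<in> HK_set R"
            then have "subdegree h \<le> Max (HK_set R)" by (rule Max_ge[OF HKfin])
            with sv show False by simp
          qed
          have "subdegree h \<in> vals ?m" using hm h0 unfolding vals_def by blast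
          then have "subdegree h \<in> vals ?m2" using notHK unfolding HK_set_def by blast
          then obtain g where g: "g \<in> ?m2" "g \<noteq> 0" "subdegree g = subdegree h"
            unfolding vals_def by auto
          define d where "d = h $ subdegree h / g $ subdegree h"
          define h1 where "h1 = h - fps_const d * g"
          have gR: "g \<in> R" using g m2sub by blast
          have h1R: "h1 \<in> R" unfolding h1_def using hR gR contains_k[of d] subring
            by (simp add: is_subring_def)
          have gnz: "g $ subdegree h \<noteq> 0" using g by (metis nth_subdegree_nonzero)
          have h1v: "h1 = 0 \<or> subdegree h1 > subdegree h"
          proof (cases "h1 = 0")
            case False
            have "subdegree h1 \<ge> Suc (subdegree h)"
            proof (rule subdegree_geI[OF False])
              fix i assume "i < Suc (subdegree h)"
              then consider "i < subdegree h" | "i = subdegree h" by linarith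
              then show "h1 $ i = 0"
              proof cases
                case 1
                then have "h $ i = 0" "g $ i = 0" using g(3) by (auto intro: nth_less_subdegree_zero)
                then show ?thesis by (simp add: h1_def)
              next
                case 2 then show ?thesis using gnz by (simp add: h1_def d_def)
              qed
            qed
            then show ?thesis by simp
          qed simp
          have "h1 \<in> ?m2"
          proof (cases "h1 = 0")
            case True then show ?thesis by (simp add: ip_zero)
          next
            case False
            have lt: "subdegree h < subdegree h1" using False h1v by simp
            have "N - subdegree h1 < k" using hk lt \<open>\<not> N \<le> subdegree h\<close> by linarith
            moreover have "subdegree h1 > Max (HK_set R)" using False h1v sv by simp
            ultimately show ?thesis using less.IH[of "N - subdegree h1", rule_format, OF _ refl h1R] by blast
          qed
          moreover have "fps_const d * g \<in> ?m2" using ip_mult[OF mmul contains_k g(1)] .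
          ultimately have "h1 + fps_const d * g \<in> ?m2" by (rule ip_add)
          then show ?thesis by (simp add: h1_def)
        qed
      qed
    qed
  qed
  show ?thesis using main[of "N - subdegree f", rule_format, OF refl fR fval] .
qed

end
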